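(* Let $d\ge1$, let $v\in(\Sigma^d)^*$ be nonempty, let $r\in[0,d-1]$ and let $w$ be the length-$r$ prefix of $v$. Then $\downarrow_{\preceq_d}(v^*w)=\{u\in\Sigma^*\mid |u|\equiv r \pmod d \text{ and } \kappa_d(u)(i)\subseteq\kappa_d(v)(i)\text{ for all }i\in[1,d]\}$.
   Context: $u\preceq_d v$ iff $v$ arises from $u$ by inserting factors whose lengths are divisible by $d$, i.e. $u=u_0\cdots u_n$ and $v=u_0v_1u_1\cdots v_nu_n$ with $d\mid |v_i|$. For $w\in\Sigma^*$ and $i\in[1,d]$, $\kappa_d(w)(i)$ is the set of letters $a\in\Sigma$ that occur in $w$ at some position $p$ (positions numbered from $1$) with $p\equiv i\pmod d$. $\downarrow_{\preceq_d}S=\{x\mid\exists s\in S: x\preceq_d s\}$. *)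

theory Defs
  imports Main
begin

text \<open>u \<preceq>_d v: v arises from u = u_0 ... u_n by inserting factors v_1..v_n
  with d dividing each |v_i|: v = u_0 v_1 u_1 ... v_n u_n.\<close>
definition subw_d :: "nat \<Rightarrow> 'a list \<Rightarrow> 'a list \<Rightarrow> bool" where
  "subw_d d u v \<longleftrightarrow>
     (\<exists>us vs. length us = Suc (length vs) \<and> u = concat us \<and>
        v = hd us @ concat (map (\<lambda>(x, y). x @ y) (zip vs (tl us))) \<and>
        (\<forall>x\<in>set vs. d dvd length x))"

definition kappa :: "nat \<Rightarrow> 'a list \<Rightarrow> nat \<Rightarrow> 'a set" where
  "kappa d w i = {a. \<exists>p\<in>{1..length w}. w ! (p - 1) = a \<and> p mod d = i mod d}"

definition down_d :: "nat \<Rightarrow> 'a list set \<Rightarrow> 'a list set" where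
  "down_d d S = {x. \<exists>s\<in>S. subw_d d x s}"

definition star_conc :: "'a list \<Rightarrow> 'a list \<Rightarrow> 'a list set" where
  "star_conc v w = {concat (replicate n v) @ w | n. True}"

end

theory Submission
  imports Defs
begin

inductive emb :: "nat \<Rightarrow> 'a list \<Rightarrow> 'a list \<Rightarrow> bool" for d where
  nil: "emb d [] []"
| cons: "emb d u s \<Longrightarrow> emb d (a#u) (a#s)"
| ins: "emb d u s \<Longrightarrow> d dvd length x \<Longrightarrow> emb d u (x @ s)"

lemma emb_refl: "emb d u u"
  by (induction u) (auto intro: emb.intros)

lemma emb_app: "emb d u1 s1 \<Longrightarrow> emb d u2 s2 \<Longrightarrow> emb d (u1 @ u2) (s1 @ s2)"
  by (induction rule: emb.induct) (auto intro: emb.intros)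

lemma emb_subw: "emb d u s \<Longrightarrow> subw_d d u s"
proof (induction rule: emb.induct)
  case nil
  show ?case unfolding subw_d_def by (rule exI[of _ "[[]]"], rule exI[of _ "[]"]) simp
next
  case (cons u s a)
  then obtain us vs where h: "length us = Suc (length vs)" "u = concat us"
    "s = hd us @ concat (map (\<lambda>(x, y). x @ y) (zip vs (tl us)))" "\<forall>x\<in>set vs. d dvd length x"
    unfolding subw_d_def by blast
  then obtain u0 us' where us: "us = u0 # us'" by (cases us) auto
  show ?case unfolding subw_d_def
    by (rule exI[of _ "(a # u0) # us'"], rule exI[of _ vs]) (use h us in auto)
next
  case (ins u s x)
  then obtain us vs where h: "length us = Suc (length vs)" "u = concat us"
    "s = hd us @ concat (map (\<lambda>(x, y). x @ y) (zip vs (tl us)))" "\<forall>x\<in>set vs. d dvd length x"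
    unfolding subw_d_def by blast
  then obtain u0 us' where us: "us = u0 # us'" by (cases us) auto
  show ?case unfolding subw_d_def
    by (rule exI[of _ "[] # us"], rule exI[of _ "x # vs"]) (use h ins us in auto)
qed

lemma subw_emb_aux: "length us = Suc (length vs) \<Longrightarrow> (\<forall>x\<in>set vs. d dvd length x) \<Longrightarrow>
   emb d (concat us) (hd us @ concat (map (\<lambda>(x, y). x @ y) (zip vs (tl us))))"
proof (induction vs arbitrary: us)
  case Nil
  then obtain u0 where "us = [u0]" by (cases us) auto
  then show ?case by (simp add: emb_refl)
next
  case (Cons x vs)
  then obtain u0 us' where us: "us = u0 # us'" by (cases us) auto
  with Cons.prems obtain u1 us'' where us': "us' = u1 # us''" by (cases us') auto
  have "emb d (concat us') (hd us' @ concat (map (\<lambda>(x, y). x @ y) (zip vs (tl us'))))"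
    using Cons us by auto
  hence "emb d (concat us') (x @ (hd us' @ concat (map (\<lambda>(x, y). x @ y) (zip vs (tl us')))))"
    using Cons.prems by (auto intro: emb.ins)
  from emb_app[OF emb_refl[of d u0] this] show ?case using us us' by simp
qed

lemma subw_emb: "subw_d d u s \<Longrightarrow> emb d u s"
  unfolding subw_d_def using subw_emb_aux by blast

lemma emb_len: "emb d u s \<Longrightarrow> \<exists>k. length s = length u + d * k"
proof (induction rule: emb.induct)
  case (ins u s x)
  then obtain k where "length s = length u + d * k" by auto
  moreover obtain k' where "length x = d * k'" using ins(2) by (auto elim: dvdE)
  ultimately show ?case by (intro exI[of _ "k + k'"]) (simp add: algebra_simps)
qed auto

lemma emb_pos: "emb d u s \<Longrightarrow> j < length u \<Longrightarrow>
   \<exists>j'<length s. s ! j' = u ! j \<and> j' mod d = j mod d"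
proof (induction arbitrary: j rule: emb.induct)
  case (cons u s a)
  show ?case
  proof (cases j)
    case 0 then show ?thesis by (intro exI[of _ 0]) auto
  next
    case (Suc j0)
    with cons obtain j' where "j' < length s" "s ! j' = u ! j0" "j' mod d = j0 mod d" by auto
    moreover have "Suc j' mod d = Suc j0 mod d" using \<open>j' mod d = j0 mod d\<close> by (metis mod_Suc_eq)
    ultimately show ?thesis using Suc by (intro exI[of _ "Suc j'"]) auto
  qed
next
  case (ins u s x)
  then obtain j' where "j' < length s" "s ! j' = u ! j" "j' mod d = j mod d" by auto
  then show ?case using ins(2) by (intro exI[of _ "length x + j'"]) (auto simp: nth_append)
qed auto

lemma suc_mod_cancel: "Suc q mod d = Suc j mod d \<Longrightarrow> q mod (d::nat) = j mod d"
  by (metis Zero_not_Suc mod_Suc nat.inject)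

lemma kappa_alt: "a \<in> kappa d w i \<longleftrightarrow> (\<exists>j<length w. w ! j = a \<and> Suc j mod d = i mod d)"
  unfolding kappa_def
  apply auto
   apply (metis One_nat_def Suc_pred le_simps(3) less_eq_Suc_le)
  by force

lemma concat_rep_nth: "j < m * length v \<Longrightarrow> concat (replicate m v) ! j = v ! (j mod length v)"
proof (induction m arbitrary: j)
  case (Suc m)
  show ?case
  proof (cases "j < length v")
    case True then show ?thesis by (simp add: nth_append)
  next
    case False
    then have "j - length v < m * length v" using Suc.prems by auto
    then show ?thesis using False Suc.IH by (simp add: nth_append le_mod_geq)
  qed
qed simp

lemma build:
  assumes d: "d \<ge> 1" and dv: "d dvd length v"
    and K: "\<forall>j<length u. \<exists>q<length v. v ! q = u ! j \<and> q mod d = j mod d"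
  shows "\<exists>n. emb d u (concat (replicate n v) @ take (length u mod d) v)"
  using K
proof (induction u rule: rev_induct)
  case Nil
  show ?case by (intro exI[of _ 0]) (auto intro: emb.intros)
next
  case (snoc a u)
  then obtain n where IH: "emb d u (concat (replicate n v) @ take (length u mod d) v)"
    by (metis length_append_singleton less_SucI nth_append)
  obtain q where q: "q < length v" "v ! q = a" "q mod d = length u mod d"
    using snoc.prems by (metis length_append_singleton lessI nth_append_length)
  define t where "t = length u mod d"
  define t' where "t' = length (u @ [a]) mod d"
  have tq: "t \<le> q" using q(3) unfolding t_def by (metis mod_less_eq_dividend)
  have tmod: "t mod d = t" unfolding t_def by simp
  define x where "x = drop t (take q v)"
  define y where "y = drop (Suc q) v @ take t' v"
  have dx: "d dvd length x"
  proof -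
    have "q mod d = t mod d" using q(3) tmod unfolding t_def by simp
    then show ?thesis using mod_eq_dvd_iff_nat[of t q d] tq q(1) unfolding x_def by simp
  qed
  obtain k where k: "length v = d * k" using dv by (auto elim: dvdE)
  obtain m where m: "q = d * m + t" using q(3) unfolding t_def
    by (metis mod_mult_div_eq add.commute mult.commute)
  have tlt: "t < d" unfolding t_def using d by simp
  have t'c: "(Suc t < d \<and> t' = Suc t) \<or> (Suc t = d \<and> t' = 0)"
  proof -
    have "t' = Suc t mod d" unfolding t'_def t_def by (simp add: mod_Suc_eq)
    show ?thesis
    proof (cases "Suc t < d")
      case True then show ?thesis using \<open>t' = Suc t mod d\<close> by simp
    next
      case False then have "Suc t = d" using tlt by linarith
      then show ?thesis using \<open>t' = Suc t mod d\<close> by simp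
    qed
  qed
  have t'v: "t' \<le> length v" using t'c q(1) tq by auto
  have mk: "m < k"
  proof (rule ccontr)
    assume "\<not> m < k"
    then have "d * k \<le> d * m" by simp
    then show False using q(1) k m by linarith
  qed
  have dy: "d dvd length y"
  proof -
    have ly: "length y = length v - Suc q + t'" unfolding y_def using t'v by simp
    show ?thesis
    proof (cases "Suc t < d")
      case True
      then have "t' = Suc t" using t'c by auto
      then have "length y = d * k - d * m" using ly k m q(1) by simp
      then show ?thesis by (simp add: diff_mult_distrib2[symmetric])
    next
      case False
      then have "t' = 0" "Suc t = d" using t'c by auto
      then have "length y = d * k - d * (Suc m)" using ly k m q(1) by simp
      then show ?thesis by (metis diff_mult_distrib2 dvd_triv_left)
    qed
  qed
  have e1: "emb d [] y" using emb.ins[OF emb.nil dy] by simp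
  have e2: "emb d [a] (x @ a # y)" using emb.ins[OF emb.cons[OF e1] dx] .
  have eq: "take t v @ x @ a # drop (Suc q) v = v"
  proof -
    have "take t v @ x = take q v" unfolding x_def using tq
      by (metis append_take_drop_id min.absorb1 take_take)
    then show ?thesis using id_take_nth_drop[OF q(1)] q(2) by (metis append.assoc)
  qed
  have "concat (replicate n v) @ take t v @ x @ a # y = concat (replicate (Suc n) v) @ take t' v"
  proof -
    have "concat (replicate (Suc n) v) = concat (replicate n v) @ v"
    proof -
      have "replicate (Suc n) v = replicate n v @ [v]" by (simp add: replicate_append_same)
      then show ?thesis by simp
    qed
    then show ?thesis using eq unfolding y_def by (metis append.assoc append_Cons)
  qed
  then have "emb d (u @ [a]) (concat (replicate (Suc n) v) @ take t' v)"
    using emb_app[OF IH e2] unfolding t_def by (metis append.assoc append_Nil2)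
  then show ?case unfolding t'_def by blast
qed

theorem mainTheorem13:
  fixes d r :: nat and v w :: "'a list"
  assumes "d \<ge> 1" and "v \<noteq> []" and "d dvd length v" and "r \<le> d - 1"
    and "w = take r v"
  shows "down_d d (star_conc v w) =
    {u. length u mod d = r mod d \<and> (\<forall>i\<in>{1..d}. kappa d u i \<subseteq> kappa d v i)}"
proof -
  have lv: "d \<le> length v" using assms(2,3) by (simp add: dvd_imp_le)
  have rd: "r < d" using assms(1,4) by linarith
  have lw: "length w = r" using assms(5) rd lv by simp
  show ?thesis
  proof (intro set_eqI iffI)
    fix u assume "u \<in> down_d d (star_conc v w)"
    then obtain n where e: "emb d u (concat (replicate n v) @ w)"
      unfolding down_d_def star_conc_def using subw_emb by blast
    define s where "s = concat (replicate n v) @ w"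
    obtain k where k: "length s = length u + d * k" using emb_len[OF e] s_def by blast
    have lc: "length (concat (replicate n v)) = n * length v" by (induction n) auto
    have ls: "length s = n * length v + r" unfolding s_def using lw lc by simp
    have "length s mod d = r mod d" unfolding ls using assms(3)
      by (metis dvd_mult mod_mult_self3 dvdE mult.commute)
    moreover have "length s mod d = length u mod d" unfolding k by simp
    ultimately have A: "length u mod d = r mod d" by simp
    have B: "\<forall>i\<in>{1..d}. kappa d u i \<subseteq> kappa d v i"
    proof (intro ballI subsetI)
      fix i a assume "a \<in> kappa d u i"
      then obtain j where j: "j < length u" "u ! j = a" "Suc j mod d = i mod d"
        using kappa_alt by metis
      obtain j' where j': "j' < length s" "s ! j' = a" "j' mod d = j mod d"
        using emb_pos[OF e j(1)] j(2) unfolding s_def by blast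
      have rep: "concat (replicate (Suc n) v) = concat (replicate n v) @ v"
      proof -
        have "replicate (Suc n) v = replicate n v @ [v]" by (simp add: replicate_append_same)
        then show ?thesis by simp
      qed
      have "s = take (length s) (concat (replicate (Suc n) v))"
        unfolding rep s_def assms(5) using lv rd by (simp add: min_def)
      then have "s ! j' = concat (replicate (Suc n) v) ! j'"
        using j'(1) by (metis nth_take)
      also have "\<dots> = v ! (j' mod length v)"
        by (rule concat_rep_nth) (use j'(1) ls rd lv in simp)
      finally have va: "v ! (j' mod length v) = a" using j' by simp
      have "j' mod length v mod d = j' mod d" using assms(3) by (simp add: mod_mod_cancel)
      then have "Suc (j' mod length v) mod d = Suc j mod d" using j'(3)
        by (metis mod_Suc_eq)
      then show "a \<in> kappa d v i" unfolding kappa_alt using va j(3) assms(2)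
        by (intro exI[of _ "j' mod length v"]) auto
    qed
    from A B show "u \<in> {u. length u mod d = r mod d \<and> (\<forall>i\<in>{1..d}. kappa d u i \<subseteq> kappa d v i)}" by blast
  next
    fix u assume "u \<in> {u. length u mod d = r mod d \<and> (\<forall>i\<in>{1..d}. kappa d u i \<subseteq> kappa d v i)}"
    then have L: "length u mod d = r mod d" and
      KK: "\<forall>i\<in>{1..d}. kappa d u i \<subseteq> kappa d v i" by auto
    have K: "\<forall>j<length u. \<exists>q<length v. v ! q = u ! j \<and> q mod d = j mod d"
    proof (intro allI impI)
      fix j assume j: "j < length u"
      define i where "i = (if Suc j mod d = 0 then d else Suc j mod d)"
      have i1: "i \<in> {1..d}"
      proof (cases "Suc j mod d = 0")
        case True then show ?thesis unfolding i_def using assms(1) by simp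
      next
        case False
        have "Suc j mod d < d" using assms(1) by simp
        then show ?thesis unfolding i_def using False by simp
      qed
      have i2: "i mod d = Suc j mod d"
        unfolding i_def by (cases "Suc j mod d = 0") simp_all
      have "\<exists>jj<length u. u ! jj = u ! j \<and> Suc jj mod d = i mod d"
        using j i2 by (intro exI[of _ j]) simp
      then have "u ! j \<in> kappa d u i" by (simp only: kappa_alt)
      then have "u ! j \<in> kappa d v i" by (meson KK i1 subsetD)
      then have "\<exists>q<length v. v ! q = u ! j \<and> Suc q mod d = i mod d" by (simp only: kappa_alt)
      then obtain q where "q < length v" "v ! q = u ! j" "Suc q mod d = Suc j mod d"
        using i2 by (metis (no_types))
      then show "\<exists>q<length v. v ! q = u ! j \<and> q mod d = j mod d"
        using suc_mod_cancel by blast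
    qed
    obtain n where "emb d u (concat (replicate n v) @ take (length u mod d) v)"
      using build[OF assms(1,3) K] by blast
    then have "emb d u (concat (replicate n v) @ w)" using L rd assms(5) by simp
    then show "u \<in> down_d d (star_conc v w)"
      unfolding down_d_def star_conc_def using emb_subw by blast
  qed
qed

end
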